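(* There is $p_0\in(0,2/3)$ such that for every $p\in[0,p_0)$, $$\lim_{n\to\infty}\mathbf P_p\left(\xi^1_{\lceil (C_0(p)+1)\log n\rceil}\neq\emptyset\right)=0,\qquad\text{where } C_0(p)=\frac{2}{\log(2/(1+p))}.$$
   Context: Fix an integer $r\ge3$. Let $V_n=\{1,\dots,n\}$ with $rn$ even. Let $\mathbb P$ be the law of the random multigraph $G_n$ on $V_n$ obtained by giving each vertex $r$ half-edges and pairing all $rn$ half-edges uniformly at random, and $\tilde{\mathbb P}=\mathbb P(\cdot\mid G_n\text{ is simple})$, with expectation $\tilde{\mathbb E}$. Given $G_n$ and $p\in[0,1]$, the threshold-two contact process $(\xi_t)_{t\ge0}$, $\xi_t\subseteq V_n$, is the discrete-time Markov chain in which, given $\xi_t$, independently for each vertex $x$: $x\in\xi_{t+1}$ with probability $p$ if $x$ has at least two neighbors in $\xi_t$, and $x\notin\xi_{t+1}$ otherwise. Its law given $G_n$ is $P_{G_n,p}$, and $\mathbf P_p=\tilde{\mathbb E}\,P_{G_n,p}$. $\xi^1_t$ denotes the process started from $\xi_0=V_n$. *)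

theory Defs
  imports "HOL-Probability.Probability"
begin

text \<open>Configuration model: vertex set V_n = {1..n}, each vertex x carries half-edges
 (x,i) with i < r.  A pairing of all half-edges is a fixed-point-free involution of
 the half-edge set (identity outside it, so that the set of pairings is finite).\<close>

definition half_edges :: "nat \<Rightarrow> nat \<Rightarrow> (nat \<times> nat) set" where
  "half_edges r n = {1..n} \<times> {..<r}"

definition pairings :: "nat \<Rightarrow> nat \<Rightarrow> ((nat \<times> nat) \<Rightarrow> (nat \<times> nat)) set" where
  "pairings r n = {\<sigma>. (\<forall>h\<in>half_edges r n. \<sigma> h \<in> half_edges r n \<and> \<sigma> h \<noteq> h \<and> \<sigma> (\<sigma> h) = h)
                     \<and> (\<forall>h. h \<notin> half_edges r n \<longrightarrow> \<sigma> h = h)}"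

definition simple_pairing :: "nat \<Rightarrow> nat \<Rightarrow> ((nat \<times> nat) \<Rightarrow> (nat \<times> nat)) \<Rightarrow> bool" where
  "simple_pairing r n \<sigma> \<longleftrightarrow>
     (\<forall>h\<in>half_edges r n. fst (\<sigma> h) \<noteq> fst h) \<and>
     (\<forall>x\<in>{1..n}. \<forall>i<r. \<forall>j<r. fst (\<sigma> (x,i)) = fst (\<sigma> (x,j)) \<longrightarrow> i = j)"

definition simple_pairings :: "nat \<Rightarrow> nat \<Rightarrow> ((nat \<times> nat) \<Rightarrow> (nat \<times> nat)) set" where
  "simple_pairings r n = {\<sigma> \<in> pairings r n. simple_pairing r n \<sigma>}"

definition nbrs :: "nat \<Rightarrow> nat \<Rightarrow> ((nat \<times> nat) \<Rightarrow> (nat \<times> nat)) \<Rightarrow> nat \<Rightarrow> nat set" where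
  "nbrs r n \<sigma> x = {y. \<exists>i<r. x \<in> {1..n} \<and> fst (\<sigma> (x,i)) = y}"

definition tc_step :: "nat \<Rightarrow> nat \<Rightarrow> ((nat \<times> nat) \<Rightarrow> (nat \<times> nat)) \<Rightarrow> real \<Rightarrow> nat set \<Rightarrow> nat set pmf" where
  "tc_step r n \<sigma> p A =
     map_pmf (\<lambda>f. {x \<in> {1..n}. f x})
       (Pi_pmf {1..n} False
          (\<lambda>x. if card (nbrs r n \<sigma> x \<inter> A) \<ge> 2 then bernoulli_pmf p else return_pmf False))"

primrec tc_proc :: "nat \<Rightarrow> nat \<Rightarrow> ((nat \<times> nat) \<Rightarrow> (nat \<times> nat)) \<Rightarrow> real \<Rightarrow> nat \<Rightarrow> nat set pmf" where
  "tc_proc r n \<sigma> p 0 = return_pmf {1..n}"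
| "tc_proc r n \<sigma> p (Suc t) = bind_pmf (tc_proc r n \<sigma> p t) (tc_step r n \<sigma> p)"

text \<open>Annealed probability  P_p(xi^1_t \<noteq> {}) = E~ P_{G_n,p}(xi^1_t \<noteq> {}): the configuration
 model conditioned on simplicity is the uniform distribution on simple pairings.
 (If no simple pairing exists the value is 0; irrelevant for the limit.)\<close>
definition annealed_survival :: "nat \<Rightarrow> nat \<Rightarrow> real \<Rightarrow> nat \<Rightarrow> real" where
  "annealed_survival r n p t =
     (\<Sum>\<sigma>\<in>simple_pairings r n. measure_pmf.prob (tc_proc r n \<sigma> p t) {A. A \<noteq> {}})
       / real (card (simple_pairings r n))"

definition C0 :: "real \<Rightarrow> real" where
  "C0 p = 2 / ln (2 / (1 + p))"

end

theory Submission imports Defs begin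

lemma nbr_count:
  assumes s: "\<sigma> \<in> pairings r n" and A: "A \<subseteq> {1..n}"
  shows "card {x\<in>{1..n}. nbrs r n \<sigma> x \<inter> A \<noteq> {}} \<le> r * card A"
proof -
  have fin: "finite A" using A finite_subset by blast
  have "{x\<in>{1..n}. nbrs r n \<sigma> x \<inter> A \<noteq> {}} \<subseteq> (\<lambda>(y,j). fst (\<sigma> (y,j))) ` (A \<times> {..<r})"
  proof
    fix x assume "x \<in> {x\<in>{1..n}. nbrs r n \<sigma> x \<inter> A \<noteq> {}}"
    then obtain i y where x: "x \<in> {1..n}" and i: "i < r" and y: "y \<in> A" and e: "fst (\<sigma> (x,i)) = y"
      by (auto simp: nbrs_def)
    have h: "(x,i) \<in> half_edges r n" using x i by (auto simp: half_edges_def)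
    with s have hs: "\<sigma> (x,i) \<in> half_edges r n" "\<sigma> (\<sigma> (x,i)) = (x,i)" by (auto simp: pairings_def)
    obtain j where j: "\<sigma> (x,i) = (y,j)" "j < r" using hs e by (cases "\<sigma> (x,i)") (auto simp: half_edges_def)
    have "x = fst (\<sigma> (y,j))" using hs j by simp
    thus "x \<in> (\<lambda>(y,j). fst (\<sigma> (y,j))) ` (A \<times> {..<r})" using y j by force
  qed
  hence "card {x\<in>{1..n}. nbrs r n \<sigma> x \<inter> A \<noteq> {}} \<le> card ((\<lambda>(y,j). fst (\<sigma> (y,j))) ` (A \<times> {..<r}))"
    by (intro card_mono) (auto intro: finite_imageI simp: fin)
  also have "\<dots> \<le> card (A \<times> {..<r})" by (rule card_image_le) (simp add: fin)
  also have "\<dots> = r * card A" by (simp add: card_cartesian_product)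
  finally show ?thesis .
qed

lemma set_tc_step: "set_pmf (tc_step r n \<sigma> p A) \<subseteq> Pow {1..n}"
  by (auto simp: tc_step_def)

lemma set_tc_proc: "set_pmf (tc_proc r n \<sigma> p t) \<subseteq> Pow {1..n}"
proof (induction t)
  case (Suc t)
  show ?case unfolding tc_proc.simps set_bind_pmf using set_tc_step by blast
qed simp

lemma step_bound:
  assumes s: "\<sigma> \<in> pairings r n" and A: "A \<subseteq> {1..n}" and p: "0 \<le> p" "p \<le> 1"
  shows "(\<integral>\<^sup>+B. ennreal (real (card B)) \<partial>tc_step r n \<sigma> p A) \<le> ennreal (p * r * card A)"
proof -
  define Q where "Q = (\<lambda>x. if card (nbrs r n \<sigma> x \<inter> A) \<ge> 2 then bernoulli_pmf p else return_pmf False)"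
  have "(\<integral>\<^sup>+B. ennreal (real (card B)) \<partial>tc_step r n \<sigma> p A)
      = (\<integral>\<^sup>+f. ennreal (real (card {x\<in>{1..n}. f x})) \<partial>Pi_pmf {1..n} False Q)"
    unfolding tc_step_def Q_def by simp
  also have "\<dots> = (\<integral>\<^sup>+f. (\<Sum>x\<in>{1..n}. of_bool (f x)) \<partial>Pi_pmf {1..n} False Q)"
  proof (intro nn_integral_cong)
    fix f :: "nat \<Rightarrow> bool"
    have "(\<Sum>x\<in>{1..n}. of_bool (f x) :: ennreal) = of_nat (card ({1..n} \<inter> {x. f x}))" by simp
    also have "{1..n} \<inter> {x. f x} = {x\<in>{1..n}. f x}" by auto
    finally show "ennreal (real (card {x\<in>{1..n}. f x})) = (\<Sum>x\<in>{1..n}. of_bool (f x))"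
      by (simp add: ennreal_of_nat_eq_real_of_nat)
  qed
  also have "\<dots> = (\<Sum>x\<in>{1..n}. \<integral>\<^sup>+f. of_bool (f x) \<partial>Pi_pmf {1..n} False Q)"
    by (rule nn_integral_sum) auto
  also have "\<dots> = (\<Sum>x\<in>{1..n}. \<integral>\<^sup>+b. of_bool b \<partial>Q x)"
  proof (intro sum.cong refl)
    fix x assume x: "x \<in> {1..n}"
    have "(\<integral>\<^sup>+f. of_bool (f x) \<partial>Pi_pmf {1..n} False Q)
        = (\<integral>\<^sup>+b. of_bool b \<partial>map_pmf (\<lambda>f. f x) (Pi_pmf {1..n} False Q))"
      by simp
    also have "map_pmf (\<lambda>f. f x) (Pi_pmf {1..n} False Q) = Q x" using x by (subst Pi_pmf_component) auto
    finally show "(\<integral>\<^sup>+f. of_bool (f x) \<partial>Pi_pmf {1..n} False Q) = (\<integral>\<^sup>+b. of_bool b \<partial>Q x)" .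
  qed
  also have "\<dots> = (\<Sum>x\<in>{1..n}. ennreal (if card (nbrs r n \<sigma> x \<inter> A) \<ge> 2 then p else 0))"
  proof (intro sum.cong refl)
    fix x
    have b: "(\<integral>\<^sup>+b. of_bool b \<partial>bernoulli_pmf p) = ennreal p"
    proof -
      have "(\<lambda>b. of_bool b :: ennreal) = indicator {True}" by (auto simp: indicator_def fun_eq_iff)
      hence "(\<integral>\<^sup>+b. of_bool b \<partial>bernoulli_pmf p) = emeasure (measure_pmf (bernoulli_pmf p)) {True}"
        by simp
      also have "\<dots> = ennreal p" using p by (simp add: emeasure_pmf_single)
      finally show ?thesis .
    qed
    show "(\<integral>\<^sup>+b. of_bool b \<partial>Q x) = ennreal (if card (nbrs r n \<sigma> x \<inter> A) \<ge> 2 then p else 0)"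
      by (simp add: Q_def b)
  qed
  also have "\<dots> = ennreal (\<Sum>x\<in>{1..n}. (if card (nbrs r n \<sigma> x \<inter> A) \<ge> 2 then p else 0))"
    using p by (subst sum_ennreal) auto
  also have "(\<Sum>x\<in>{1..n}. (if card (nbrs r n \<sigma> x \<inter> A) \<ge> 2 then p else 0)) 
        = p * card {x\<in>{1..n}. card (nbrs r n \<sigma> x \<inter> A) \<ge> 2}"
    by (simp add: sum.If_cases Int_def conj_commute)
  also have "\<dots> \<le> p * card {x\<in>{1..n}. nbrs r n \<sigma> x \<inter> A \<noteq> {}}"
    using p by (intro mult_left_mono) (auto intro!: card_mono)
  also have "\<dots> \<le> p * (r * card A)"
    using p nbr_count[OF s A] by (intro mult_left_mono) (simp_all flip: of_nat_mult)
  finally show ?thesis by (simp add: ennreal_leI mult.assoc)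
qed

lemma proc_bound:
  assumes s: "\<sigma> \<in> pairings r n" and p: "0 \<le> p" "p \<le> 1"
  shows "(\<integral>\<^sup>+A. ennreal (real (card A)) \<partial>tc_proc r n \<sigma> p t) \<le> ennreal (real n * (p * real r) ^ t)"
proof (induction t)
  case 0
  show ?case by simp
next
  case (Suc t)
  have "(\<integral>\<^sup>+A. ennreal (real (card A)) \<partial>tc_proc r n \<sigma> p (Suc t))
      = (\<integral>\<^sup>+A. (\<integral>\<^sup>+B. ennreal (real (card B)) \<partial>tc_step r n \<sigma> p A) \<partial>tc_proc r n \<sigma> p t)"
    by simp
  also have "\<dots> \<le> (\<integral>\<^sup>+A. ennreal (p * r) * ennreal (real (card A)) \<partial>tc_proc r n \<sigma> p t)"
  proof (intro nn_integral_mono_AE AE_pmfI)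
    fix A assume "A \<in> set_pmf (tc_proc r n \<sigma> p t)"
    hence A: "A \<subseteq> {1..n}" using set_tc_proc by blast
    show "(\<integral>\<^sup>+B. ennreal (real (card B)) \<partial>tc_step r n \<sigma> p A) \<le> ennreal (p * r) * ennreal (real (card A))"
      using step_bound[OF s A p] p by (simp add: ennreal_mult)
  qed
  also have "\<dots> = ennreal (p * r) * (\<integral>\<^sup>+A. ennreal (real (card A)) \<partial>tc_proc r n \<sigma> p t)"
    by (rule nn_integral_cmult) auto
  also have "\<dots> \<le> ennreal (p * r) * ennreal (real n * (p * real r) ^ t)"
    by (intro mult_left_mono Suc) auto
  also have "\<dots> = ennreal (real n * (p * real r) ^ Suc t)"
    using p by (simp add: ennreal_mult[symmetric] algebra_simps)
  finally show ?case .
qed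

lemma surv_bound:
  assumes s: "\<sigma> \<in> pairings r n" and p: "0 \<le> p" "p \<le> 1"
  shows "measure_pmf.prob (tc_proc r n \<sigma> p t) {A. A \<noteq> {}} \<le> real n * (p * real r) ^ t"
proof -
  have "ennreal (measure_pmf.prob (tc_proc r n \<sigma> p t) {A. A \<noteq> {}})
      = emeasure (measure_pmf (tc_proc r n \<sigma> p t)) {A. A \<noteq> {}}"
    by (simp add: measure_pmf.emeasure_eq_measure)
  also have "\<dots> = (\<integral>\<^sup>+A. indicator {A. A \<noteq> {}} A \<partial>tc_proc r n \<sigma> p t)"
    by simp
  also have "\<dots> \<le> (\<integral>\<^sup>+A. ennreal (real (card A)) \<partial>tc_proc r n \<sigma> p t)"
  proof (intro nn_integral_mono_AE AE_pmfI)
    fix A assume "A \<in> set_pmf (tc_proc r n \<sigma> p t)"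
    hence A: "A \<subseteq> {1..n}" using set_tc_proc by blast
    hence "finite A" using finite_subset by blast
    thus "indicator {A. A \<noteq> {}} A \<le> ennreal (real (card A))"
      by (cases "A = {}") (auto simp: indicator_def Suc_le_eq card_gt_0_iff)
  qed
  also have "\<dots> \<le> ennreal (real n * (p * real r) ^ t)" by (rule proc_bound[OF s p])
  finally show ?thesis using p by (simp add: ennreal_le_iff)
qed

lemma ann_bound:
  assumes p: "0 \<le> p" "p \<le> 1"
  shows "annealed_survival r n p t \<le> real n * (p * real r) ^ t" and "0 \<le> annealed_survival r n p t"
proof -
  have K: "0 \<le> real n * (p * real r) ^ t" using p by simp
  show "0 \<le> annealed_survival r n p t"
    unfolding annealed_survival_def by (intro divide_nonneg_nonneg sum_nonneg) auto
  show "annealed_survival r n p t \<le> real n * (p * real r) ^ t"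
  proof (cases "card (simple_pairings r n) = 0")
    case True thus ?thesis using K by (simp add: annealed_survival_def)
  next
    case False
    have "(\<Sum>\<sigma>\<in>simple_pairings r n. measure_pmf.prob (tc_proc r n \<sigma> p t) {A. A \<noteq> {}})
        \<le> of_nat (card (simple_pairings r n)) * (real n * (p * real r) ^ t)"
      by (rule sum_bounded_above) (use surv_bound p in \<open>auto simp: simple_pairings_def\<close>)
    thus ?thesis using False unfolding annealed_survival_def
      by (simp add: divide_le_eq mult.commute)
  qed
qed

theorem corollary1:
  fixes r :: nat
  assumes "r \<ge> 3"
  shows "\<exists>p0::real. 0 < p0 \<and> p0 < 2/3 \<and>
           (\<forall>p. 0 \<le> p \<and> p < p0 \<longrightarrow>
              ((\<lambda>n. annealed_survival r n p (nat \<lceil>(C0 p + 1) * ln (real n)\<rceil>)) \<longlongrightarrow> 0)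
                (inf sequentially (principal {n. even (r * n)})))"
proof (intro exI conjI allI impI)
  have r: "real r \<ge> 3" using assms by simp
  show "0 < 1 / (3 * real r)" using r by simp
  show "1 / (3 * real r) < 2/3" using r by (simp add: field_simps)
  fix p :: real assume pp: "0 \<le> p \<and> p < 1 / (3 * real r)"
  hence p0: "0 \<le> p" and pr: "p * r < 1/3" using r by (auto simp: field_simps)
  have "p * 3 \<le> p * real r" using r p0 by (intro mult_left_mono) auto
  hence p1: "p \<le> 1" "p < 1" using pr by linarith+
  define c where "c = C0 p + 1"
  have "2 / (1 + p) > 1" using p1 p0 by (simp add: field_simps)
  hence "ln (2 / (1 + p)) > 0" by (intro ln_gt_zero)
  hence "C0 p > 0" by (simp add: C0_def)
  hence c1: "c > 1" by (simp add: c_def)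
  define q where "q = p * real r"
  have q0: "0 \<le> q" using p0 by (simp add: q_def)
  have qe: "q \<le> exp (-1)"
  proof -
    have "exp (-1::real) = 1 / exp 1" using exp_minus[of "1::real"] by (simp add: inverse_eq_divide)
    also have "\<dots> \<ge> 1/3" using exp_le by (simp add: field_simps)
    finally show ?thesis using pr q_def by simp
  qed
  have bound: "annealed_survival r n p (nat \<lceil>c * ln (real n)\<rceil>) \<le> real n powr (1 - c)" if n: "n \<ge> 1" for n :: nat
  proof -
    define t where "t = nat \<lceil>c * ln (real n)\<rceil>"
    have lnn: "ln (real n) \<ge> 0" using n by simp
    have tge: "real t \<ge> c * ln (real n)" unfolding t_def using c1 lnn by linarith
    have "annealed_survival r n p t \<le> real n * q ^ t"
      using ann_bound(1)[OF p0 p1(1)] q_def by simp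
    also have "q ^ t \<le> exp (-1) ^ t" by (intro power_mono qe q0)
    also have "exp (-1) ^ t = exp (- real t)" by (simp add: exp_of_nat_mult[symmetric])
    also have "\<dots> \<le> exp (- (c * ln (real n)))" using tge by simp
    also have "\<dots> = real n powr (- c)" using n by (simp add: powr_def)
    finally have "annealed_survival r n p t \<le> real n * real n powr (- c)"
      using n by (simp add: mult_left_mono)
    also have "\<dots> = real n powr (1 - c)" using n by (simp add: powr_diff powr_minus field_simps)
    finally show ?thesis by (simp add: t_def)
  qed
  have lim: "((\<lambda>n. annealed_survival r n p (nat \<lceil>(C0 p + 1) * ln (real n)\<rceil>)) \<longlongrightarrow> 0) sequentially"
  proof (rule tendsto_sandwich[where f = "\<lambda>_. 0" and h = "\<lambda>n. real n powr (1 - c)"])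
    show "\<forall>\<^sub>F n in sequentially. 0 \<le> annealed_survival r n p (nat \<lceil>(C0 p + 1) * ln (real n)\<rceil>)"
      using ann_bound(2)[OF p0 p1(1)] by simp
    show "\<forall>\<^sub>F n in sequentially. annealed_survival r n p (nat \<lceil>(C0 p + 1) * ln (real n)\<rceil>) \<le> real n powr (1 - c)"
      using eventually_ge_at_top[of "1::nat"] by eventually_elim (use bound c_def in simp)
    show "((\<lambda>_. 0::real) \<longlongrightarrow> 0) sequentially" by simp
    show "((\<lambda>n. real n powr (1 - c)) \<longlongrightarrow> 0) sequentially"
      using c1 by (intro tendsto_neg_powr filterlim_real_sequentially) auto
  qed
  show "((\<lambda>n. annealed_survival r n p (nat \<lceil>(C0 p + 1) * ln (real n)\<rceil>)) \<longlongrightarrow> 0)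
                (inf sequentially (principal {n. even (r * n)}))"
    by (rule tendsto_mono[OF _ lim]) simp
qed

end
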